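(* Let Algorithm DEW be run with learning rate $\eta>0$ and delay bound $d_{\max}\ge\max_t d_t$, with $\eta'=\min\{\eta,(4e\,d_{\max})^{-1}\}$, and suppose $N=\max_{t\in[T]}N_t\ge1$. Then for every $i\in\{1,\dots,T\}$ and every $a\in[K]$, for every realization, $$q^a(\Psi_i)\le\left(1+\frac{1}{2N-1}\right)q^a(\Psi_{i-1}).$$
   Context: Setting: fix integers $K\ge 2$, $T\ge 1$, $[K]=\{1,\dots,K\}$. An oblivious adversary fixes in advance losses $\ell_t^a\in[0,1]$ and nonnegative integer delays $d_t$. In each round $t$ the learner picks $A_t\in[K]$ and at the end of round $t$ observes the pairs $(s,\ell_s^{A_s})$ for all $s\le t$ with $s+d_s=t$. Algorithm DEW with inputs $\eta>0$ and $d_{\max}$: set $\eta'=\min\{\eta,(4e\,d_{\max})^{-1}\}$, $w_0^a=1$. For $t=1,2,\dots$: $p_t^a=w_{t-1}^a/\sum_b w_{t-1}^b$; draw $A_t\sim p_t$; at the end of round $t$, for every $s$ with $s+d_s=t$ form $\hat\ell_s^a=\ell_s^a\mathbb 1(a=A_s)/p_s^a$; update $w_t^a=w_{t-1}^a\exp(-\eta'\sum_{s:\,s+d_s=t}\hat\ell_s^a)$. Notation: for a set $C$ of time indices, $q^a(C)=\dfrac{\exp(-\eta'\sum_{s\in C}\hat\ell_s^a)}{\sum_b\exp(-\eta'\sum_{s\in C}\hat\ell_s^b)}$. $N_t=|\{s\in[T]: s+d_s\in[t,t+d_t)\}|$ and $N=\max_tN_t$ (note $N\le 2d_{\max}$).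 $\mathcal Z=(z_1,\dots,z_T)$ is the permutation of $[T]$ sorted in ascending order of $z+d_z$, ties broken randomly, and $\Psi_i=\{z_1,\dots,z_i\}$ (so $\Psi_0=\emptyset$). *)

theory Defs
  imports Complex_Main
begin

text \<open>Conventions: rounds are 1..T, arms are 1..K. Losses l t a, delays d t,
  actions A t (a realization of the learner's draws). A probability history
  assigns p t a for rounds t.\<close>

definition dew_lhat :: "(nat \<Rightarrow> nat \<Rightarrow> real) \<Rightarrow> (nat \<Rightarrow> nat) \<Rightarrow> (nat \<Rightarrow> nat \<Rightarrow> real)
    \<Rightarrow> nat \<Rightarrow> nat \<Rightarrow> real" where
  "dew_lhat l A p s a = (if a = A s then l s a / p s a else 0)"

definition dew_q :: "nat \<Rightarrow> real \<Rightarrow> (nat \<Rightarrow> nat \<Rightarrow> real) \<Rightarrow> (nat \<Rightarrow> nat)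
    \<Rightarrow> (nat \<Rightarrow> nat \<Rightarrow> real) \<Rightarrow> nat set \<Rightarrow> nat \<Rightarrow> real" where
  "dew_q K eta' l A p C a =
     exp (- eta' * (\<Sum>s\<in>C. dew_lhat l A p s a)) /
     (\<Sum>b\<in>{1..K}. exp (- eta' * (\<Sum>s\<in>C. dew_lhat l A p s b)))"

text \<open>History of the algorithm's distributions: dew_hist t contains p_1,...,p_t.
  p_{t+1} uses all feedback s with s + d_s \<le> t (received by the end of round t).\<close>
primrec dew_hist :: "nat \<Rightarrow> real \<Rightarrow> (nat \<Rightarrow> nat \<Rightarrow> real) \<Rightarrow> (nat \<Rightarrow> nat) \<Rightarrow> (nat \<Rightarrow> nat)
    \<Rightarrow> nat \<Rightarrow> (nat \<Rightarrow> nat \<Rightarrow> real)" where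
  "dew_hist K eta' l d A 0 = (\<lambda>t a. 0)"
| "dew_hist K eta' l d A (Suc t) =
     (dew_hist K eta' l d A t)(Suc t :=
        dew_q K eta' l A (dew_hist K eta' l d A t) {s. 1 \<le> s \<and> s + d s \<le> t})"

definition dew_p :: "nat \<Rightarrow> real \<Rightarrow> (nat \<Rightarrow> nat \<Rightarrow> real) \<Rightarrow> (nat \<Rightarrow> nat) \<Rightarrow> (nat \<Rightarrow> nat)
    \<Rightarrow> nat \<Rightarrow> nat \<Rightarrow> real" where
  "dew_p K eta' l d A t = dew_hist K eta' l d A t t"

definition dew_eta' :: "real \<Rightarrow> nat \<Rightarrow> real" where
  "dew_eta' eta dmax = min eta (1 / (4 * exp 1 * real dmax))"

definition N_t :: "nat \<Rightarrow> (nat \<Rightarrow> nat) \<Rightarrow> nat \<Rightarrow> nat" where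
  "N_t T d t = card {s \<in> {1..T}. t \<le> s + d s \<and> s + d s < t + d t}"

definition N_max :: "nat \<Rightarrow> (nat \<Rightarrow> nat) \<Rightarrow> nat" where
  "N_max T d = Max ((N_t T d) ` {1..T})"

end

theory Submission
  imports Defs
begin
lemma dew_q_pos: "K \<ge> 1 \<Longrightarrow> 0 < dew_q K e l A p C a"
  unfolding dew_q_def
  by (intro divide_pos_pos exp_gt_zero sum_pos) auto

lemma hist_eq: "1 \<le> r \<Longrightarrow> r \<le> t \<Longrightarrow> dew_hist K e l d A t r = dew_p K e l d A r"
proof (induction t)
  case 0 then show ?case by simp
next
  case (Suc t)
  show ?case
  proof (cases "r = Suc t")
    case True then show ?thesis by (simp add: dew_p_def)
  next
    case False then show ?thesis using Suc by simp
  qed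
qed

lemma dew_q_cong: "(\<And>r. r \<in> C \<Longrightarrow> p r = p' r) \<Longrightarrow> dew_q K e l A p C a = dew_q K e l A p' C a"
proof -
  assume h: "\<And>r. r \<in> C \<Longrightarrow> p r = p' r"
  have "\<And>b. (\<Sum>s\<in>C. dew_lhat l A p s b) = (\<Sum>s\<in>C. dew_lhat l A p' s b)"
    by (rule sum.cong) (simp_all add: dew_lhat_def h)
  then show ?thesis by (simp add: dew_q_def)
qed


lemma p_eq: "1 \<le> s \<Longrightarrow> dew_p K e l d A s = dew_q K e l A (dew_p K e l d A) {r. 1 \<le> r \<and> r + d r \<le> s - 1}"
proof -
  assume "1 \<le> s"
  then obtain t where t: "s = Suc t" by (cases s) auto
  have "dew_p K e l d A s = dew_q K e l A (dew_hist K e l d A t) {r. 1 \<le> r \<and> r + d r \<le> t}"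
    unfolding dew_p_def t by simp
  also have "\<dots> = dew_q K e l A (dew_p K e l d A) {r. 1 \<le> r \<and> r + d r \<le> t}"
    by (intro ext dew_q_cong hist_eq) auto
  finally show ?thesis using t by simp
qed

lemma step:
  fixes C :: "nat set" and s b c :: nat
  assumes K: "K \<ge> 1" and fin: "finite C" and sC: "s \<notin> C" and e: "e \<ge> 0"
    and b: "b = A s" and bK: "b \<in> {1..K}" and l0: "0 \<le> l s b" and p0: "0 < p s b"
    and Q: "dew_q K e l A p C b * (e * l s b / p s b) < 1"
  shows "dew_q K e l A p (insert s C) c \<le> dew_q K e l A p C c / (1 - dew_q K e l A p C b * (e * l s b / p s b))"
proof -
  define L where "L c = (\<Sum>r\<in>C. dew_lhat l A p r c)" for c
  define w where "w c = exp (- e * L c)" for c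
  define Z where "Z = (\<Sum>c\<in>{1..K}. w c)"
  define h where "h c = dew_lhat l A p s c" for c
  define x where "x = e * l s b / p s b"
  have h0: "h c \<ge> 0" for c using l0 p0 b by (simp add: h_def dew_lhat_def)
  have hb: "h b = l s b / p s b" using b by (simp add: h_def dew_lhat_def)
  have hnb: "c \<noteq> b \<Longrightarrow> h c = 0" for c using b by (simp add: h_def dew_lhat_def)
  have ins: "(\<Sum>r\<in>insert s C. dew_lhat l A p r c) = h c + L c" for c
    by (simp add: fin sC h_def L_def)
  have wins: "exp (- e * (\<Sum>r\<in>insert s C. dew_lhat l A p r c)) = exp (- e * h c) * w c" for c
    by (simp add: ins w_def mult_exp_exp algebra_simps)
  have qC: "dew_q K e l A p C c = w c / Z" for c by (simp add: dew_q_def w_def Z_def L_def)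
  have qI: "dew_q K e l A p (insert s C) c = exp (- e * h c) * w c / (\<Sum>c\<in>{1..K}. exp (- e * h c) * w c)" for c
    using wins[of c] wins by (simp add: dew_q_def)
  have wpos: "w c > 0" for c by (simp add: w_def)
  have Zpos: "Z > 0" unfolding Z_def using K by (intro sum_pos wpos) auto
  have sumh: "(\<Sum>c\<in>{1..K}. e * h c * w c) = x * w b"
  proof -
    have "(\<Sum>c\<in>{1..K}. e * h c * w c) = (\<Sum>c\<in>{1..K}. if c = b then e * h b * w b else 0)"
      by (rule sum.cong) (auto simp: hnb)
    also have "\<dots> = e * h b * w b" using bK by simp
    finally show ?thesis by (simp add: hb x_def)
  qed
  have Z'ge: "(\<Sum>c\<in>{1..K}. exp (- e * h c) * w c) \<ge> Z - x * w b"
  proof -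
    have "(\<Sum>c\<in>{1..K}. (1 - e * h c) * w c) \<le> (\<Sum>c\<in>{1..K}. exp (- e * h c) * w c)"
    proof (rule sum_mono)
      fix c
      have "1 - e * h c \<le> exp (- e * h c)" using exp_ge_add_one_self[of "- e * h c"] by simp
      then show "(1 - e * h c) * w c \<le> exp (- e * h c) * w c"
        using wpos[of c] by (intro mult_right_mono) auto
    qed
    moreover have "(\<Sum>c\<in>{1..K}. (1 - e * h c) * w c) = Z - (\<Sum>c\<in>{1..K}. e * h c * w c)"
      by (simp add: Z_def algebra_simps sum_subtractf)
    ultimately show ?thesis using sumh by simp
  qed
  define qb where "qb = w b / Z"
  have Qeq: "dew_q K e l A p C b * (e * l s b / p s b) = qb * x" by (simp add: qC qb_def x_def)
  have Q1: "qb * x < 1" using Q Qeq by simp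
  have ZQ: "Z - x * w b = Z * (1 - qb * x)" using Zpos by (simp add: qb_def field_simps)
  have posZ': "Z * (1 - qb * x) > 0" using Zpos Q1 by simp
  have "dew_q K e l A p (insert s C) c \<le> w c / (Z * (1 - qb * x))"
  proof -
    have num: "exp (- e * h c) * w c \<le> w c"
      using wpos[of c] e h0[of c] by (simp add: mult_le_cancel_right1 mult_nonneg_nonneg)
    have "exp (- e * h c) * w c / (\<Sum>c\<in>{1..K}. exp (- e * h c) * w c) \<le> w c / (\<Sum>c\<in>{1..K}. exp (- e * h c) * w c)"
      using num Z'ge ZQ posZ' by (intro divide_right_mono) auto
    also have "\<dots> \<le> w c / (Z * (1 - qb * x))"
      using Z'ge ZQ posZ' wpos[of c] by (intro divide_left_mono) auto
    finally show ?thesis by (simp add: qI)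
  qed
  also have "\<dots> = dew_q K e l A p C c / (1 - dew_q K e l A p C b * (e * l s b / p s b))"
    using Zpos Qeq by (simp add: qC)
  finally show ?thesis .
qed

lemma N_le:
  assumes "t \<in> {1..T}" and "\<And>s. s \<in> {1..T} \<Longrightarrow> d s \<le> D"
  shows "N_t T d t \<le> 2 * D"
proof -
  have dt: "d t \<le> D" using assms by auto
  have "{s \<in> {1..T}. t \<le> s + d s \<and> s + d s < t + d t} \<subseteq> {t - D..<t + D}"
  proof
    fix s assume s: "s \<in> {s \<in> {1..T}. t \<le> s + d s \<and> s + d s < t + d t}"
    then have "d s \<le> D" using assms(2) by auto
    then show "s \<in> {t - D..<t + D}" using s dt by auto
  qed
  then have "N_t T d t \<le> card {t - D..<t + D}" unfolding N_t_def by (intro card_mono) auto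
  then show ?thesis by simp
qed

lemma prefix_set:
  fixes M :: "nat set"
  assumes "M \<subseteq> {1..n}" and "\<And>m m'. m \<in> M \<Longrightarrow> 1 \<le> m' \<Longrightarrow> m' \<le> m \<Longrightarrow> m' \<in> M"
  shows "M = {1..card M}"
proof (cases "M = {}")
  case True then show ?thesis by simp
next
  case False
  have fin: "finite M" using assms(1) finite_subset by blast
  define k where "k = Max M"
  have kM: "k \<in> M" using fin False by (simp add: k_def)
  have "M = {1..k}"
  proof
    show "M \<subseteq> {1..k}" using assms(1) fin k_def by auto
    show "{1..k} \<subseteq> M" using assms(2) kM by auto
  qed
  then show ?thesis by simp
qed

theorem lemma10:
  fixes K T dmax :: nat and eta :: real
    and l :: "nat \<Rightarrow> nat \<Rightarrow> real" and d :: "nat \<Rightarrow> nat" and A :: "nat \<Rightarrow> nat"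
    and z :: "nat \<Rightarrow> nat"
  assumes "K \<ge> 2" and "T \<ge> 1" and "eta > 0"
    and "\<And>t a. t \<in> {1..T} \<Longrightarrow> a \<in> {1..K} \<Longrightarrow> 0 \<le> l t a \<and> l t a \<le> 1"
    and "\<And>t. t \<in> {1..T} \<Longrightarrow> d t \<le> dmax"
    and "\<And>t. t \<in> {1..T} \<Longrightarrow> A t \<in> {1..K}"
    and "N_max T d \<ge> 1"
    and "bij_betw z {1..T} {1..T}"
    and "\<And>i j. i \<in> {1..T} \<Longrightarrow> j \<in> {1..T} \<Longrightarrow> i \<le> j \<Longrightarrow> z i + d (z i) \<le> z j + d (z j)"
    and "i \<in> {1..T}" and "a \<in> {1..K}"
  shows "dew_q K (dew_eta' eta dmax) l A (dew_p K (dew_eta' eta dmax) l d A) (z ` {1..i}) a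
         \<le> (1 + 1 / (2 * real (N_max T d) - 1)) *
           dew_q K (dew_eta' eta dmax) l A (dew_p K (dew_eta' eta dmax) l d A) (z ` {1..i-1}) a"
proof -
  note lb = assms(4) and dle = assms(5) and AK = assms(6) and srt = assms(9)
  define et where "et = dew_eta' eta dmax"
  define P where "P = dew_p K et l d A"
  define q where "q C c = dew_q K et l A P C c" for C c
  define \<psi> where "\<psi> j = z ` {1..j}" for j
  define D where "D = dmax"
  define N where "N = N_max T d"
  have K1: "K \<ge> 1" using assms(1) by simp
  have Nle: "N \<le> 2 * D"
  proof -
    have "\<forall>t\<in>{1..T}. N_t T d t \<le> 2 * D" using N_le dle D_def by blast
    then show ?thesis unfolding N_def N_max_def using assms(2) by (subst Max_le_iff) auto
  qed
  have N1: "N \<ge> 1" using assms(7) N_def by simp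
  have D1: "D \<ge> 1" using Nle N1 by simp
  have e2: "exp (1::real) \<ge> 2" using exp_ge_add_one_self[of 1] by simp
  have etpos: "et > 0" using assms(3) D1 by (simp add: et_def dew_eta'_def D_def)
  have etle: "et \<le> 1 / (8 * real D)"
  proof -
    have "et \<le> 1 / (4 * exp 1 * real D)" by (simp add: et_def dew_eta'_def D_def)
    also have "\<dots> \<le> 1 / (8 * real D)" using e2 D1 by (intro divide_left_mono) auto
    finally show ?thesis .
  qed
  have zT: "m \<in> {1..T} \<Longrightarrow> z m \<in> {1..T}" for m using assms(8) by (auto simp: bij_betw_def)
  have zinj: "inj_on z {1..T}" using assms(8) by (auto simp: bij_betw_def)
  have zim: "z ` {1..T} = {1..T}" using assms(8) by (auto simp: bij_betw_def)
  have psiSuc: "\<psi> (Suc m) = insert (z (Suc m)) (\<psi> m)" for m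
    by (simp add: \<psi>_def atLeastAtMostSuc_conv)
  have notin: "Suc m \<le> T \<Longrightarrow> z (Suc m) \<notin> \<psi> m" for m
  proof
    assume m: "Suc m \<le> T" and "z (Suc m) \<in> \<psi> m"
    then obtain m' where m': "m' \<in> {1..m}" "z (Suc m) = z m'" by (auto simp: \<psi>_def)
    have "Suc m = m'" by (rule inj_onD[OF zinj m'(2)]) (use m m'(1) in auto)
    then show False using m' by simp
  qed
  have finpsi: "finite (\<psi> m)" for m by (simp add: \<psi>_def)
  have Ppos: "1 \<le> s \<Longrightarrow> P s c > 0" for s c
    unfolding P_def by (subst p_eq) (auto intro: dew_q_pos K1)
  have qpos: "q C c > 0" for C c unfolding q_def using K1 by (rule dew_q_pos)
  define u where "u = 1 / (4 * real D)"
  have u14: "u \<le> 1/4" using D1 by (simp add: u_def)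
  have upos: "u > 0" using D1 by (simp add: u_def)
  define Qf where "Qf j = q (\<psi> (j-1)) (A (z j)) * (et * l (z j) (A (z j)) / P (z j) (A (z j)))" for j
  have stepq: "q (\<psi> j) c \<le> q (\<psi> (j-1)) c / (1 - Qf j)" if j: "j \<in> {1..T}" and Q1: "Qf j < 1" for j c
  proof -
    obtain m where jm: "j = Suc m" using j by (cases j) auto
    have mT: "Suc m \<le> T" using j jm by simp
    have ni: "z j \<notin> \<psi> m" using notin[OF mT] jm by simp
    have zjT: "z j \<in> {1..T}" using zT[OF j] .
    have Q1': "dew_q K et l A P (\<psi> m) (A (z j)) * (et * l (z j) (A (z j)) / P (z j) (A (z j))) < 1"
      using Q1 by (simp add: Qf_def q_def jm)
    have "dew_q K et l A P (insert (z j) (\<psi> m)) c \<le> dew_q K et l A P (\<psi> m) c /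
       (1 - dew_q K et l A P (\<psi> m) (A (z j)) * (et * l (z j) (A (z j)) / P (z j) (A (z j))))"
      apply (rule step[OF K1 finpsi ni etpos[THEN less_imp_le] refl])
      using AK[OF zjT] lb[OF zjT AK[OF zjT]] Ppos zjT Q1' by auto
    then show ?thesis by (simp add: jm psiSuc q_def Qf_def)
  qed
  have Qbound: "j \<in> {1..T} \<longrightarrow> Qf j \<le> u" for j
  proof (induction j rule: less_induct)
    case (less j)
    show ?case
    proof
      assume j: "j \<in> {1..T}"
      define s where "s = z j"
      define b where "b = A s"
      have sT: "s \<in> {1..T}" using zT j s_def by simp
      have bK: "b \<in> {1..K}" using AK sT b_def by simp
      define S where "S = {r. 1 \<le> r \<and> r + d r \<le> s - 1}"
      define M where "M = {m \<in> {1..T}. z m \<in> S}"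
      have ST: "S \<subseteq> {1..T}" using sT by (auto simp: S_def)
      have SM: "S = z ` M"
      proof
        show "S \<subseteq> z ` M"
        proof
          fix r assume r: "r \<in> S"
          then have "r \<in> z ` {1..T}" using ST zim by auto
          then obtain m where "m \<in> {1..T}" "r = z m" by auto
          then show "r \<in> z ` M" using r by (auto simp: M_def)
        qed
        show "z ` M \<subseteq> S" by (auto simp: M_def)
      qed
      have Msub: "M \<subseteq> {1..j-1}"
      proof
        fix m assume m: "m \<in> M"
        then have mT: "m \<in> {1..T}" and zm: "z m + d (z m) \<le> s - 1" by (auto simp: M_def S_def)
        have "\<not> j \<le> m"
        proof
          assume "j \<le> m"
          then have "z j + d (z j) \<le> z m + d (z m)" using srt j mT by blast
          then show False using zm sT unfolding s_def atLeastAtMost_iff by linarith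
        qed
        then show "m \<in> {1..j-1}" using mT by auto
      qed
      have Mdown: "m' \<in> M" if "m \<in> M" "1 \<le> m'" "m' \<le> m" for m m'
      proof -
        have mT: "m \<in> {1..T}" and zm: "z m + d (z m) \<le> s - 1" using that by (auto simp: M_def S_def)
        have m'T: "m' \<in> {1..T}" using that mT by auto
        have "z m' + d (z m') \<le> z m + d (z m)" using srt m'T mT that by blast
        moreover have "1 \<le> z m'" using zT[OF m'T] by simp
        ultimately show ?thesis using zm m'T by (auto simp: M_def S_def)
      qed
      define k where "k = card M"
      have Mk: "M = {1..k}" unfolding k_def using Msub Mdown by (intro prefix_set) auto
      have kj: "k \<le> j - 1" using Msub Mk by (cases k) auto
      have Sk: "S = \<psi> k" using SM Mk by (simp add: \<psi>_def)
      have Ps: "P s = q (\<psi> k)"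
      proof -
        have "P s = dew_q K et l A P S" unfolding P_def S_def using sT by (intro p_eq) auto
        then show ?thesis by (simp add: q_def Sk fun_eq_iff)
      qed
      have chain: "m \<le> j - 1 \<longrightarrow> k \<le> m \<longrightarrow> q (\<psi> m) b \<le> q (\<psi> k) b / (1 - u) ^ (m - k)" for m
      proof (induction m)
        case 0 then show ?case by simp
      next
        case (Suc m)
        show ?case
        proof (intro impI)
          assume m1: "Suc m \<le> j - 1" and km: "k \<le> Suc m"
          show "q (\<psi> (Suc m)) b \<le> q (\<psi> k) b / (1 - u) ^ (Suc m - k)"
          proof (cases "k = Suc m")
            case True then show ?thesis by simp
          next
            case False
            then have km': "k \<le> m" using km by simp
            have IH: "q (\<psi> m) b \<le> q (\<psi> k) b / (1 - u) ^ (m - k)" using Suc.IH m1 km' by simp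
            have smT: "Suc m \<in> {1..T}" using m1 j by auto
            have Qs: "Qf (Suc m) \<le> u" using less.IH[of "Suc m"] m1 smT j by auto
            have "q (\<psi> (Suc m)) b \<le> q (\<psi> m) b / (1 - Qf (Suc m))"
              using stepq[OF smT] Qs u14 by simp
            also have "\<dots> \<le> q (\<psi> m) b / (1 - u)"
              using Qs u14 qpos[of "\<psi> m" b] by (intro divide_left_mono) auto
            also have "\<dots> \<le> q (\<psi> k) b / (1 - u) ^ (m - k) / (1 - u)"
              using IH u14 by (intro divide_right_mono) auto
            also have "\<dots> = q (\<psi> k) b / (1 - u) ^ (Suc m - k)"
              using km' by (simp add: Suc_diff_le)
            finally show ?thesis .
          qed
        qed
      qed
      have cardE: "j - 1 - k \<le> 2 * D"
      proof -
        have "z ` {k+1..j-1} \<subseteq> {s - D..s + D} - {s}"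
        proof
          fix r assume "r \<in> z ` {k+1..j-1}"
          then obtain m where m: "m \<in> {k+1..j-1}" "r = z m" by auto
          have mT: "m \<in> {1..T}" using m j by auto
          have "m \<notin> M" using Mk m by auto
          then have r1: "z m \<notin> S" using mT by (auto simp: M_def)
          have rT: "r \<in> {1..T}" using zT mT m by simp
          then have "s \<le> r + d r" using r1 m by (auto simp: S_def)
          moreover have "r + d r \<le> s + d s" using srt mT j m s_def by auto
          moreover have "d r \<le> D" "d s \<le> D" using dle rT sT D_def by auto
          moreover have "r \<noteq> s" using inj_onD[OF zinj, of m j] m mT j s_def by auto
          ultimately show "r \<in> {s - D..s + D} - {s}" by auto
        qed
        then have "card (z ` {k+1..j-1}) \<le> card ({s - D..s + D} - {s})" by (intro card_mono) auto
        moreover have "card (z ` {k+1..j-1}) = j - 1 - k"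
        proof -
          have "inj_on z {k+1..j-1}" by (rule inj_on_subset[OF zinj]) (use j in auto)
          then show ?thesis by (simp add: card_image)
        qed
        moreover have "card ({s - D..s + D} - {s}) \<le> 2 * D" by simp
        ultimately show ?thesis by linarith
      qed
      define n where "n = j - 1 - k"
      have bern: "(1 - u) ^ n \<ge> 1 / 2"
      proof -
        have "1 + real n * (- u) \<le> (1 + - u) ^ n" using u14 by (intro Bernoulli_inequality) auto
        moreover have "real n * u \<le> 1/2" using cardE D1 by (simp add: n_def u_def field_simps)
        ultimately show ?thesis by simp
      qed
      have lsb: "l s b \<le> 1" "0 \<le> l s b" using lb sT bK by auto
      have qk: "q (\<psi> k) b > 0" by (rule qpos)
      have "Qf j = q (\<psi> (j-1)) b * (et * l s b / q (\<psi> k) b)"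
        by (simp add: Qf_def s_def[symmetric] b_def[symmetric] Ps)
      also have "\<dots> \<le> q (\<psi> k) b / (1 - u) ^ n * (et * 1 / q (\<psi> k) b)"
        using chain[of "j-1"] kj lsb etpos qk u14
        by (intro mult_mono divide_right_mono mult_left_mono) (auto simp: n_def)
      also have "\<dots> = et / (1 - u) ^ n" using qk by simp
      also have "\<dots> \<le> et / (1/2)" using bern etpos by (intro divide_left_mono) auto
      also have "\<dots> \<le> u" using etle by (simp add: u_def)
      finally show "Qf j \<le> u" .
    qed
  qed
  have Qi: "Qf i \<le> u" using Qbound assms(10) by blast
  have u2N: "u \<le> 1 / (2 * real N)" using Nle N1 by (simp add: u_def field_simps)
  have "q (\<psi> i) a \<le> q (\<psi> (i-1)) a / (1 - Qf i)" using stepq[OF assms(10)] Qi u14 by simp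
  also have "\<dots> \<le> q (\<psi> (i-1)) a / (1 - 1 / (2 * real N))"
  proof -
    have h1: "1 / (2 * real N) \<le> 1/2" using N1 by (simp add: field_simps)
    have h2: "1 - 1 / (2 * real N) \<le> 1 - Qf i" using Qi u2N by linarith
    have h3: "0 < (1 - Qf i) * (1 - 1 / (2 * real N))" using h1 h2 by (intro mult_pos_pos) linarith+
    show ?thesis using qpos[of "\<psi> (i-1)" a] h2 h3 by (intro divide_left_mono) auto
  qed
  also have "\<dots> = (1 + 1 / (2 * real N - 1)) * q (\<psi> (i-1)) a"
    using N1 by (simp add: field_simps)
  finally show ?thesis by (simp add: q_def \<psi>_def P_def et_def N_def)
qed
end
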